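(* Let $S$ be a $k$-dimensional subspace of $\mathbb{R}^n$ with orthogonal projection $P_S$, let $B$ be a real symmetric $n\times n$ matrix, $l\in\mathbb{R}$, $\delta_L>0$, $t>0$, and $Y=vv^T$ with $v\in\mathbb{R}^n$. Suppose $\lambda_{\min}(B|_S)>l+\delta_L$. Define $$L_B=\frac{\bigl(P_S(B-(l+\delta_L)I)P_S\bigr)^{\dagger 2}}{\Phi_{l+\delta_L}(B)-\Phi_l(B)}-\bigl(P_S(B-(l+\delta_L)I)P_S\bigr)^{\dagger}.$$ If $L_B\bullet Y\ge 1/t$, then $\Phi_{l+\delta_L}(B+tY)\le\Phi_l(B)$ and $\lambda_{\min}((B+tY)|_S)>l+\delta_L$.
   Context: $B|_S$ denotes the restriction (compression) of $B$ to $S$, i.e. the $k\times k$ matrix of the quadratic form $x\mapsto x^TBx$ on $S$ in an orthonormal basis of $S$; its eigenvalues are $\lambda_1(B|_S)\le\dots\le\lambda_k(B|_S)$. For $l<\lambda_{\min}(B|_S)$, the lower potential is $\Phi_l(B)=\operatorname{Tr}\bigl((P_S(B-lI)P_S)^\dagger\bigr)=\sum_{i=1}^k\frac{1}{\lambda_i(B|_S)-l}$. $A^\dagger$ is the Moore–Penrose pseudoinverse, $A^{\dagger2}=(A^\dagger)^2$, and $C\bullet D=\operatorname{Tr}(C^TD)$. *)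

theory Defs
  imports "HOL-Analysis.Analysis"
begin

definition proj_mat :: "(real^'n) set \<Rightarrow> real^'n^'n" where
  "proj_mat S = (THE P. \<forall>x. P *v x \<in> S \<and> (\<forall>y\<in>S. (x - P *v x) \<bullet> y = 0))"

definition pinv :: "real^'n^'n \<Rightarrow> real^'n^'n" where
  "pinv A = (THE X. A ** X ** A = A \<and> X ** A ** X = X \<and>
                    transpose (A ** X) = A ** X \<and> transpose (X ** A) = X ** A)"

text \<open>Eigenvalues of the compression B|_S, viewed as the operator P_S B on S.\<close>
definition compr_eigenvalues :: "(real^'n) set \<Rightarrow> real^'n^'n \<Rightarrow> real set" where
  "compr_eigenvalues S B =
     {\<mu>. \<exists>x\<in>S. x \<noteq> 0 \<and> proj_mat S *v (B *v x) = \<mu> *\<^sub>R x}"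

definition lambda_min_restr :: "(real^'n) set \<Rightarrow> real^'n^'n \<Rightarrow> real" where
  "lambda_min_restr S B = Min (compr_eigenvalues S B)"

definition lower_pot :: "(real^'n) set \<Rightarrow> real \<Rightarrow> real^'n^'n \<Rightarrow> real" where
  "lower_pot S l B =
     trace (pinv (proj_mat S ** (B - l *\<^sub>R mat 1) ** proj_mat S))"

definition frob :: "real^'n^'n \<Rightarrow> real^'n^'n \<Rightarrow> real" (infixl "\<bullet>\<^sub>F" 70) where
  "C \<bullet>\<^sub>F D = trace (transpose C ** D)"

definition outer :: "real^'n \<Rightarrow> real^'n^'n" where
  "outer v = (\<chi> i j. v $ i * v $ j)"

end

theory Submission
  imports Defs
begin


lemma proj_unique:
  fixes S :: "(real^'n) set"
  assumes "subspace S" "y1 \<in> S" "\<forall>w\<in>S. (x - y1) \<bullet> w = 0" "y2 \<in> S" "\<forall>w\<in>S. (x - y2) \<bullet> w = 0"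
  shows "y1 = y2"
proof -
  have d: "y1 - y2 \<in> S" using assms by (simp add: subspace_diff)
  have "(y1 - y2) \<bullet> (y1 - y2) = (x - y2) \<bullet> (y1 - y2) - (x - y1) \<bullet> (y1 - y2)"
    by (simp add: algebra_simps)
  also have "\<dots> = 0" using assms d by simp
  finally show ?thesis by simp
qed

lemma proj_exists:
  fixes S :: "(real^'n) set"
  assumes "subspace S"
  shows "\<exists>y. y \<in> S \<and> (\<forall>w\<in>S. (x - y) \<bullet> w = 0)"
proof -
  obtain y z where "y \<in> span S" "\<And>w. w \<in> span S \<Longrightarrow> orthogonal z w" "x = y + z"
    using orthogonal_subspace_decomp_exists by blast
  moreover have sp: "span S = S" using assms by simp
  ultimately have "y \<in> S" "\<forall>w\<in>S. (x - y) \<bullet> w = 0" by (auto simp: orthogonal_def)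
  then show ?thesis by blast
qed

lemma proj_mat_props:
  fixes S :: "(real^'n) set"
  assumes "subspace S"
  shows "proj_mat S *v x \<in> S \<and> (\<forall>y\<in>S. (x - proj_mat S *v x) \<bullet> y = 0)"
proof -
  define p where "p x = (SOME y. y \<in> S \<and> (\<forall>w\<in>S. (x - y) \<bullet> w = 0))" for x
  have p: "p x \<in> S \<and> (\<forall>w\<in>S. (x - p x) \<bullet> w = 0)" for x
    unfolding p_def using someI_ex[OF proj_exists[OF assms]] by blast
  have padd: "p (a + b) = p a + p b" for a b
  proof (rule proj_unique[OF assms, of _ "a+b"])
    show "p a + p b \<in> S" using p assms by (simp add: subspace_add)
    show "\<forall>w\<in>S. (a + b - (p a + p b)) \<bullet> w = 0"
    proof
      fix w assume "w \<in> S"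
      then have "(a - p a) \<bullet> w = 0" "(b - p b) \<bullet> w = 0" using p by auto
      moreover have "(a + b - (p a + p b)) = (a - p a) + (b - p b)" by simp
      ultimately show "(a + b - (p a + p b)) \<bullet> w = 0" by (simp only: inner_add_left)
    qed
  qed (use p in auto)
  have pscale: "p (c *\<^sub>R a) = c *\<^sub>R p a" for c a
  proof (rule proj_unique[OF assms, of _ "c *\<^sub>R a"])
    show "c *\<^sub>R p a \<in> S" using p assms by (simp add: subspace_scale)
    show "\<forall>w\<in>S. (c *\<^sub>R a - c *\<^sub>R p a) \<bullet> w = 0"
    proof
      fix w assume "w \<in> S"
      then have "(a - p a) \<bullet> w = 0" using p by auto
      moreover have "c *\<^sub>R a - c *\<^sub>R p a = c *\<^sub>R (a - p a)" by (simp add: scaleR_diff_right)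
      ultimately show "(c *\<^sub>R a - c *\<^sub>R p a) \<bullet> w = 0" by simp
    qed
  qed (use p in auto)
  have lin: "linear p" by (rule linearI) (simp_all add: padd pscale)
  have mw: "matrix p *v x = p x" for x using matrix_vector_mul(2)[OF lin] by metis
  have "proj_mat S = matrix p"
    unfolding proj_mat_def
  proof (rule the_equality)
    show "\<forall>x. matrix p *v x \<in> S \<and> (\<forall>y\<in>S. (x - matrix p *v x) \<bullet> y = 0)"
      using p mw by simp
    fix P :: "real^'n^'n" assume h: "\<forall>x. P *v x \<in> S \<and> (\<forall>y\<in>S. (x - P *v x) \<bullet> y = 0)"
    have "P *v x = matrix p *v x" for x
      using h[rule_format, of x] p[of x] proj_unique[OF assms, of "P *v x" x "p x"] mw by simp
    then show "P = matrix p" unfolding matrix_eq by blast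
  qed
  then show ?thesis using p mw by simp
qed



lemma inner_ext: fixes a b :: "real^'n" assumes "\<And>y. a \<bullet> y = b \<bullet> y" shows "a = b"
proof -
  have "(a - b) \<bullet> (a - b) = 0" using assms[of "a - b"] by (simp add: inner_diff_left)
  then show ?thesis by simp
qed

lemma sym_inner: fixes C :: "real^'n^'n" assumes "transpose C = C"
  shows "x \<bullet> (C *v y) = (C *v x) \<bullet> y"
proof -
  have "x \<bullet> (C *v y) = (x v* C) \<bullet> y" by (simp add: dot_lmul_matrix)
  also have "x v* C = transpose C *v x" by simp
  finally show ?thesis using assms by simp
qed

locale projS =
  fixes S :: "(real^'n) set"
  assumes sub: "subspace S"
begin

abbreviation "P \<equiv> proj_mat S"

lemma pS: "P *v x \<in> S" using proj_mat_props[OF sub] by blast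
lemma porth: "y \<in> S \<Longrightarrow> (x - P *v x) \<bullet> y = 0" using proj_mat_props[OF sub] by blast
lemma pid: "x \<in> S \<Longrightarrow> P *v x = x"
  using proj_unique[OF sub pS, of x x] porth[of _ x] by simp
lemma psym: "x \<bullet> (P *v y) = (P *v x) \<bullet> y"
proof -
  have "x \<bullet> (P *v y) = (P *v x) \<bullet> (P *v y) + (x - P *v x) \<bullet> (P *v y)" by (simp add: inner_diff_left)
  also have "\<dots> = (P *v x) \<bullet> (P *v y)" using porth[OF pS] by simp
  also have "\<dots> = (P *v x) \<bullet> y - (P *v x) \<bullet> (y - P *v y)" by (simp add: inner_diff_right)
  also have "(P *v x) \<bullet> (y - P *v y) = 0"
  proof -
    have "(y - P *v y) \<bullet> (P *v x) = 0" using porth[of "P *v x" y] pS by simp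
    then show ?thesis by (simp add: inner_commute)
  qed
  finally show ?thesis by simp
qed
lemma ptrans: "transpose P = P"
proof -
  have "transpose P *v x = P *v x" for x
  proof (rule inner_ext)
    fix y
    have "(transpose P *v x) \<bullet> y = x \<bullet> (P *v y)" by (simp add: dot_lmul_matrix)
    then show "(transpose P *v x) \<bullet> y = (P *v x) \<bullet> y" using psym by simp
  qed
  then show ?thesis unfolding matrix_eq by blast
qed
lemma pp: "P ** P = P"
  unfolding matrix_eq by (simp add: matrix_vector_mul_assoc[symmetric] pid pS)

lemma evec_orth:
  assumes C: "transpose C = C" and x1: "x1 \<in> S" "P *v (C *v x1) = m1 *\<^sub>R x1"
    and x2: "x2 \<in> S" "P *v (C *v x2) = m2 *\<^sub>R x2" and ne: "m1 \<noteq> m2"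
  shows "x1 \<bullet> x2 = 0"
proof -
  have "m2 * (x1 \<bullet> x2) = x1 \<bullet> (P *v (C *v x2))" using x2 by simp
  also have "\<dots> = x1 \<bullet> (C *v x2)" using psym pid[OF x1(1)] by metis
  also have "\<dots> = (C *v x1) \<bullet> x2" using sym_inner[OF C] by simp
  also have "\<dots> = (C *v x1) \<bullet> (P *v x2)" using pid[OF x2(1)] by simp
  also have "\<dots> = (P *v (C *v x1)) \<bullet> x2" using psym by simp
  also have "\<dots> = m1 * (x1 \<bullet> x2)" using x1 by simp
  finally show ?thesis using ne by simp
qed

lemma eig_finite:
  assumes C: "transpose C = C"
  shows "finite (compr_eigenvalues S C)"
proof -
  let ?E = "compr_eigenvalues S C"
  define f where "f m = (SOME x. x \<in> S \<and> x \<noteq> 0 \<and> P *v (C *v x) = m *\<^sub>R x)" for m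
  have f: "f m \<in> S \<and> f m \<noteq> 0 \<and> P *v (C *v f m) = m *\<^sub>R f m" if "m \<in> ?E" for m
  proof -
    have "\<exists>x. x \<in> S \<and> x \<noteq> 0 \<and> P *v (C *v x) = m *\<^sub>R x" using that unfolding compr_eigenvalues_def by blast
    then show ?thesis unfolding f_def by (rule someI_ex)
  qed
  have orth: "f m1 \<bullet> f m2 = 0" if "m1 \<in> ?E" "m2 \<in> ?E" "m1 \<noteq> m2" for m1 m2
    using evec_orth[OF C] f that by blast
  have inj: "inj_on f ?E"
  proof (rule inj_onI, rule ccontr)
    fix m1 m2 assume h: "m1 \<in> ?E" "m2 \<in> ?E" "f m1 = f m2" "m1 \<noteq> m2"
    then have "f m1 \<bullet> f m1 = 0" using orth by metis
    then show False using f h(1) by simp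
  qed
  have "pairwise orthogonal (f ` ?E)"
    unfolding pairwise_def orthogonal_def using orth by fastforce
  moreover have "0 \<notin> f ` ?E" using f by fastforce
  ultimately have "independent (f ` ?E)" by (rule pairwise_orthogonal_independent)
  then have "finite (f ` ?E)" by (rule independent_imp_finite)
  then show ?thesis using inj finite_imageD by blast
qed

lemma quad_zero:
  fixes g Q :: real
  assumes Q: "Q \<ge> 0" and h: "0 \<le> 2 * s * g + s^2 * Q" and s: "s = - g / (Q + 1)"
  shows "g = 0"
proof -
  have "0 \<le> (2 * s * g + s^2 * Q) * (Q + 1)^2" using h Q by simp
  also have "\<dots> = 2 * g * (s * (Q + 1)) * (Q + 1) + (s * (Q + 1))^2 * Q"
    by (simp add: algebra_simps power2_eq_square)
  also have "s * (Q + 1) = - g" using Q unfolding s by simp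
  also have "2 * g * (- g) * (Q + 1) + (- g)^2 * Q = -(g^2 * (Q + 2))"
    by (simp add: algebra_simps power2_eq_square)
  finally have "g^2 * (Q + 2) \<le> 0" by simp
  moreover have "g^2 * Q \<ge> 0" using Q by simp
  moreover have "g^2 * (Q + 2) = g^2 * Q + 2 * g^2" by (simp add: algebra_simps)
  ultimately have "g^2 \<le> 0" by linarith
  then show ?thesis by simp
qed

lemma eig_min:
  assumes C: "transpose C = C" and ne: "S \<noteq> {0}"
  shows "\<exists>m0 \<in> compr_eigenvalues S C. \<forall>x\<in>S. x \<bullet> (C *v x) \<ge> m0 * (x \<bullet> x)"
proof -
  let ?K = "S \<inter> sphere 0 1"
  let ?f = "\<lambda>x. x \<bullet> (C *v x)"
  have "compact ?K" using closed_subspace[OF sub]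
    by (intro closed_Int_compact compact_sphere)
  moreover obtain y where y: "y \<in> S" "y \<noteq> 0" using ne subspace_0[OF sub] by blast
  then have "(1 / norm y) *\<^sub>R y \<in> ?K" using subspace_scale[OF sub] by simp
  then have "?K \<noteq> {}" by blast
  moreover have "continuous_on ?K ?f"
    by (intro continuous_intros linear_continuous_on matrix_vector_mul_bounded_linear)
  ultimately obtain x0 where x0: "x0 \<in> ?K" "\<And>y. y \<in> ?K \<Longrightarrow> ?f x0 \<le> ?f y"
    using continuous_attains_inf by metis
  define m0 where "m0 = ?f x0"
  have x0n: "x0 \<bullet> x0 = 1" using x0 by (simp add: dot_square_norm)
  have ge: "?f z \<ge> m0 * (z \<bullet> z)" if z: "z \<in> S" for z
  proof (cases "z = 0")
    case False
    let ?u = "(1 / norm z) *\<^sub>R z"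
    have "?u \<in> ?K" using subspace_scale[OF sub z] False by simp
    then have "m0 \<le> ?f ?u" using x0(2) m0_def by blast
    also have "?f ?u = (1 / norm z) * ((1 / norm z) * ?f z)"
      by (simp only: matrix_vector_mult_scaleR inner_scaleR_left inner_scaleR_right)
    also have "\<dots> = ?f z / (norm z * norm z)" by simp
    finally have "m0 * (norm z * norm z) \<le> ?f z" using False by (simp add: le_divide_eq)
    then have "m0 * (norm z)^2 \<le> ?f z" by (simp add: power2_eq_square)
    then show ?thesis by (simp add: dot_square_norm)
  qed simp
  define r where "r = C *v x0 - m0 *\<^sub>R x0"
  have rz: "z \<bullet> r = 0" if z: "z \<in> S" for z
  proof -
    define g where "g = z \<bullet> r"
    define Q where "Q = ?f z - m0 * (z \<bullet> z)"
    have Q: "Q \<ge> 0" using ge[OF z] Q_def by simp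
    define s where "s = - g / (Q + 1)"
    have "x0 + s *\<^sub>R z \<in> S" using x0 z sub by (simp add: subspace_add subspace_scale)
    from ge[OF this] have "0 \<le> ?f (x0 + s *\<^sub>R z) - m0 * ((x0 + s *\<^sub>R z) \<bullet> (x0 + s *\<^sub>R z))" by simp
    also have "?f (x0 + s *\<^sub>R z) - m0 * ((x0 + s *\<^sub>R z) \<bullet> (x0 + s *\<^sub>R z)) = 2 * s * g + s^2 * Q"
    proof -
      have sx: "x0 \<bullet> (C *v z) = z \<bullet> (C *v x0)" using sym_inner[OF C] by (simp add: inner_commute)
      show ?thesis unfolding g_def Q_def r_def m0_def
        using sx x0n by (simp add: algebra_simps inner_add_left inner_add_right inner_diff_right
            matrix_vector_mult_scaleR power2_eq_square inner_commute)
    qed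
    finally show ?thesis using quad_zero[OF Q _ s_def] g_def by simp
  qed
  have "(P *v r) \<bullet> (P *v r) = 0"
  proof -
    have "(P *v r) \<bullet> (P *v r) = (P *v r) \<bullet> r - (P *v r) \<bullet> (r - P *v r)" by (simp add: inner_diff_right)
    also have "\<dots> = 0" using rz[OF pS] porth[OF pS, of r] by (simp add: inner_commute)
    finally show ?thesis .
  qed
  then have "P *v r = 0" by simp
  then have "P *v (C *v x0) = m0 *\<^sub>R x0" using x0 pid unfolding r_def
    by (simp add: matrix_vector_mult_diff_distrib matrix_vector_mult_scaleR)
  moreover have "x0 \<noteq> 0" "x0 \<in> S" using x0n x0 by auto
  ultimately have "m0 \<in> compr_eigenvalues S C" unfolding compr_eigenvalues_def by blast
  then show ?thesis using ge by blast
qed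

end


lemma mm_add_r: "((A::real^'n^'n) + B) ** C = A ** C + B ** C"
  unfolding matrix_eq by (simp add: matrix_vector_mul_assoc[symmetric] algebra_simps)
lemma mm_diff_r: "((A::real^'n^'n) - B) ** C = A ** C - B ** C"
  unfolding matrix_eq by (simp add: matrix_vector_mul_assoc[symmetric] algebra_simps)
lemma mm_diff_l: "(A::real^'n^'n) ** (B - C) = A ** B - A ** C"
  unfolding matrix_eq by (simp add: matrix_vector_mul_assoc[symmetric] algebra_simps)

definition "penrose A X \<longleftrightarrow> (A::real^'n^'n) ** X ** A = A \<and> X ** A ** X = X \<and>
                    transpose (A ** X) = A ** X \<and> transpose (X ** A) = X ** A"

lemma penrose_unique:
  assumes "penrose A X" "penrose A Y" shows "X = Y"
proof -
  have x1: "A ** X ** A = A" and x2: "X ** A ** X = X" and x3: "transpose (A ** X) = A ** X"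
    and x4: "transpose (X ** A) = X ** A" using assms(1) unfolding penrose_def by auto
  have y1: "A ** Y ** A = A" and y2: "Y ** A ** Y = Y" and y3: "transpose (A ** Y) = A ** Y"
    and y4: "transpose (Y ** A) = Y ** A" using assms(2) unfolding penrose_def by auto
  have tA1: "transpose A = transpose A ** (A ** Y)"
  proof -
    have "transpose A = transpose (A ** Y ** A)" using y1 by simp
    also have "\<dots> = transpose A ** transpose (A ** Y)" by (simp add: matrix_transpose_mul)
    finally show ?thesis using y3 by simp
  qed
  have tA2: "transpose A = (X ** A) ** transpose A"
  proof -
    have "transpose A = transpose (A ** X ** A)" using x1 by simp
    also have "\<dots> = transpose A ** transpose X ** transpose A" by (simp add: matrix_transpose_mul matrix_mul_assoc)
    also have "transpose A ** transpose X = transpose (X ** A)" by (simp add: matrix_transpose_mul)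
    finally show ?thesis using x4 by simp
  qed
  have "X = X ** (A ** X)" using x2 by (simp add: matrix_mul_assoc)
  also have "\<dots> = X ** transpose (A ** X)" using x3 by simp
  also have "\<dots> = X ** transpose X ** transpose A" by (simp add: matrix_transpose_mul matrix_mul_assoc)
  also have "\<dots> = X ** transpose X ** (transpose A ** (A ** Y))" using tA1 by simp
  also have "\<dots> = X ** (transpose X ** transpose A) ** A ** Y" by (simp add: matrix_mul_assoc)
  also have "transpose X ** transpose A = A ** X" using x3 by (simp add: matrix_transpose_mul)
  also have "X ** (A ** X) ** A ** Y = (X ** A ** X) ** A ** Y" by (simp add: matrix_mul_assoc)
  also have "\<dots> = X ** A ** Y" using x2 by simp
  finally have X: "X = X ** A ** Y" .
  have "Y = (Y ** A) ** Y" using y2 by simp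
  also have "\<dots> = transpose (Y ** A) ** Y" using y4 by simp
  also have "\<dots> = transpose A ** transpose Y ** Y" by (simp add: matrix_transpose_mul)
  also have "\<dots> = (X ** A) ** transpose A ** transpose Y ** Y" using tA2 by simp
  also have "\<dots> = X ** A ** (transpose A ** transpose Y) ** Y" by (simp add: matrix_mul_assoc)
  also have "transpose A ** transpose Y = Y ** A" using y4 by (simp add: matrix_transpose_mul)
  also have "X ** A ** (Y ** A) ** Y = X ** A ** (Y ** A ** Y)" by (simp add: matrix_mul_assoc)
  also have "\<dots> = X ** A ** Y" using y2 by simp
  finally show ?thesis using X by simp
qed

lemma pinv_eq:
  fixes A X P :: "real^'n^'n"
  assumes "A ** X = P" "X ** A = P" "P ** A = A" "P ** X = X" "transpose P = P"
  shows "pinv A = X"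
proof -
  have pX: "penrose A X" unfolding penrose_def using assms by simp
  show ?thesis unfolding pinv_def
  proof (rule the_equality)
    show "A ** X ** A = A \<and> X ** A ** X = X \<and> transpose (A ** X) = A ** X \<and> transpose (X ** A) = X ** A"
      using pX unfolding penrose_def .
    fix Y assume "A ** Y ** A = A \<and> Y ** A ** Y = Y \<and> transpose (A ** Y) = A ** Y \<and> transpose (Y ** A) = Y ** A"
    then have "penrose A Y" unfolding penrose_def .
    then show "Y = X" using penrose_unique pX by blast
  qed
qed



context projS begin

lemma pp2: "P ** (P ** X) = P ** X" by (simp add: matrix_mul_assoc pp)

lemma pinv_construct:
  assumes C: "transpose C = C" and pd: "\<forall>x\<in>S. x \<noteq> 0 \<longrightarrow> x \<bullet> (C *v x) > 0"
  shows "\<exists>M. (P ** C ** P) ** M = P \<and> M ** (P ** C ** P) = P \<and> P ** M = M \<and> pinv (P ** C ** P) = M"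
proof -
  define A where "A = P ** C ** P"
  have AP: "A ** P = A" unfolding A_def by (simp add: matrix_mul_assoc[symmetric] pp)
  have PA: "P ** A = A" unfolding A_def by (simp add: matrix_mul_assoc[symmetric] pp2)
  define Q where "Q = mat 1 - P"
  define E where "E = A + Q"
  have Av: "A *v x = P *v (C *v (P *v x))" for x unfolding A_def by (simp add: matrix_vector_mul_assoc matrix_mul_assoc)
  have ker: "x = 0" if Ex: "E *v x = 0" for x
  proof -
    have e: "A *v x + (x - P *v x) = 0" using Ex unfolding E_def Q_def
      by (simp add: matrix_vector_mult_add_rdistrib matrix_vector_mult_diff_rdistrib)
    have AxS: "A *v x \<in> S" using Av pS by simp
    have "(A *v x) \<bullet> (A *v x) = (A *v x) \<bullet> (A *v x + (x - P *v x)) - (x - P *v x) \<bullet> (A *v x)"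
      by (simp add: inner_add_right inner_commute)
    also have "\<dots> = 0" using e porth[OF AxS] by simp
    finally have Ax0: "A *v x = 0" by simp
    then have xP: "P *v x = x" using e by simp
    then have xS: "x \<in> S" using pS by metis
    have "x \<bullet> (A *v x) = x \<bullet> (C *v x)" using Av psym xP by metis
    then have "x \<bullet> (C *v x) = 0" using Ax0 by simp
    then show ?thesis using pd xS by force
  qed
  then obtain F where FE: "F ** E = mat 1" using matrix_left_invertible_ker[of E] by blast
  then have EF: "E ** F = mat 1" using matrix_left_right_inverse by blast
  have AQ: "A ** Q = 0" unfolding Q_def by (simp add: mm_diff_l AP)
  have QA: "Q ** A = 0" unfolding Q_def by (simp add: mm_diff_r PA)
  have PQ: "P ** Q = 0" unfolding Q_def by (simp add: mm_diff_l pp)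
  have QQ: "Q ** Q = Q" unfolding Q_def by (simp add: mm_diff_r mm_diff_l pp)
  have EQ: "E ** Q = Q" by (simp only: E_def mm_add_r AQ QQ) simp
  have QE: "Q ** E = Q" by (simp only: E_def matrix_add_ldistrib QA QQ) simp
  have FQ: "F ** Q = Q" by (metis EQ FE matrix_mul_assoc matrix_mul_lid)
  have QF: "Q ** F = Q" by (metis QE EF matrix_mul_assoc matrix_mul_rid)
  have Pd: "P = mat 1 - Q" unfolding Q_def by simp
  have Ad: "A = E - Q" unfolding E_def by simp
  define M where "M = F - Q"
  have AF: "A ** F = P"
  proof -
    have "A ** F = (E - Q) ** F" using Ad by simp
    also have "\<dots> = P" by (simp add: mm_diff_r EF QF Pd)
    finally show ?thesis .
  qed
  have FA: "F ** A = P"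
  proof -
    have "F ** A = F ** (E - Q)" using Ad by simp
    also have "\<dots> = P" by (simp add: mm_diff_l FE FQ Pd)
    finally show ?thesis .
  qed
  have AM: "A ** M = P" unfolding M_def by (simp add: mm_diff_l AQ AF)
  have MA: "M ** A = P" unfolding M_def by (simp add: mm_diff_r QA FA)
  have "M ** A = P" by (fact MA)
  have PF: "P ** F = F - Q"
  proof -
    have "P ** F = (mat 1 - Q) ** F" using Pd by simp
    also have "\<dots> = F - Q" by (simp add: mm_diff_r QF)
    finally show ?thesis .
  qed
  have PM: "P ** M = M" unfolding M_def by (simp add: mm_diff_l PQ PF)
  have "pinv A = M" by (rule pinv_eq[OF AM MA PA PM ptrans])
  then show ?thesis using AM MA PM unfolding A_def by blast
qed

end


lemma outer_mv: "outer v *v x = (v \<bullet> x) *\<^sub>R v"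
proof -
  have "(outer v *v x) $ i = ((v \<bullet> x) *\<^sub>R v) $ i" for i
  proof -
    have "(outer v *v x) $ i = (\<Sum>j\<in>UNIV. v $ i * (v $ j * x $ j))"
      by (simp add: outer_def matrix_vector_mult_def mult.assoc)
    also have "\<dots> = v $ i * (\<Sum>j\<in>UNIV. v $ j * x $ j)" by (simp add: sum_distrib_left)
    also have "\<dots> = ((v \<bullet> x) *\<^sub>R v) $ i" by (simp add: inner_vec_def)
    finally show ?thesis .
  qed
  then show ?thesis by (simp add: vec_eq_iff)
qed
lemma outer_trans: "transpose (outer v) = outer v"
  by (simp add: vec_eq_iff transpose_def outer_def mult.commute)
lemma trace_outer: "trace (outer u) = u \<bullet> u"
  by (simp add: trace_def outer_def inner_vec_def)
lemma trace_scale: "trace (k *\<^sub>R (X::real^'n^'n)) = k * trace X"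
  by (simp add: trace_def sum_distrib_left)
lemma smv: "(k *\<^sub>R (X::real^'n^'m)) *v y = k *\<^sub>R (X *v y)"
  by (simp add: vec_eq_iff matrix_vector_mult_def sum_distrib_left mult.assoc)
lemma transpose_diff: "transpose ((A::real^'n^'n) - B) = transpose A - transpose B"
  by (simp add: vec_eq_iff transpose_def)
lemma transpose_add: "transpose ((A::real^'n^'n) + B) = transpose A + transpose B"
  by (simp add: vec_eq_iff transpose_def)
lemma frob_outer: "L \<bullet>\<^sub>F outer v = v \<bullet> (L *v v)"
proof -
  have "L \<bullet>\<^sub>F outer v = (\<Sum>i\<in>UNIV. \<Sum>k\<in>UNIV. L $ k $ i * (v $ k * v $ i))"
    by (simp add: frob_def trace_def matrix_matrix_mult_def transpose_def outer_def)
  also have "\<dots> = (\<Sum>k\<in>UNIV. \<Sum>i\<in>UNIV. v $ k * (L $ k $ i * v $ i))"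
    by (subst sum.swap) (simp add: mult_ac)
  also have "\<dots> = v \<bullet> (L *v v)"
    by (simp add: inner_vec_def matrix_vector_mult_def sum_distrib_left)
  finally show ?thesis .
qed

lemma final_ineq:
  fixes a b t D s :: real
  assumes "a \<ge> 0" "b \<ge> 0" "t > 0" "(1 / D) * a - b \<ge> 1 / t" "s = t / (1 + t * b)"
  shows "D \<le> s * a"
proof (cases "D \<le> 0")
  case True
  have "s \<ge> 0" using assms by simp
  then show ?thesis using True assms(1) by (simp add: mult_nonneg_nonneg order_trans[OF True])
next
  case False
  then have D: "D > 0" by simp
  have "a / D \<ge> b + 1 / t" using assms(4) by simp
  then have "a \<ge> D * (b + 1 / t)" using D by (simp add: le_divide_eq mult.commute)
  then have "a * t \<ge> D * (b + 1 / t) * t" using assms(3) by (simp add: mult_right_mono)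
  also have "D * (b + 1 / t) * t = D * (1 + t * b)" using assms(3) by (simp add: field_simps)
  finally have "D * (1 + t * b) \<le> t * a" by (simp add: mult.commute)
  moreover have "1 + t * b > 0" using assms(2,3) by (simp add: add_pos_nonneg)
  ultimately have "D \<le> t * a / (1 + t * b)" by (simp add: le_divide_eq)
  then show ?thesis using assms(5) by simp
qed



theorem lemma3p11:
  fixes S :: "(real^'n) set" and k :: nat and B :: "real^'n^'n"
    and l \<delta>L t :: real and v :: "real^'n"
  assumes "subspace S" and "dim S = k"
    and "transpose B = B"
    and "\<delta>L > 0" and "t > 0"
    and "lambda_min_restr S B > l + \<delta>L"
    and "(let M = pinv (proj_mat S ** (B - (l + \<delta>L) *\<^sub>R mat 1) ** proj_mat S);
              L = (1 / (lower_pot S (l + \<delta>L) B - lower_pot S l B)) *\<^sub>R (M ** M) - M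
          in L \<bullet>\<^sub>F outer v \<ge> 1 / t)"
  shows "lower_pot S (l + \<delta>L) (B + t *\<^sub>R outer v) \<le> lower_pot S l B \<and>
         lambda_min_restr S (B + t *\<^sub>R outer v) > l + \<delta>L"
proof -
  interpret projS S using assms(1) by unfold_locales
  define l' where "l' = l + \<delta>L"
  define C where "C = B - l' *\<^sub>R mat 1"
  have Ct: "transpose C = C" unfolding C_def using assms(3) by (simp add: transpose_diff transpose_scalar)
  have Cv: "C *v x = B *v x - l' *\<^sub>R x" for x
    unfolding C_def by (simp add: matrix_vector_mult_diff_rdistrib smv)
  obtain \<mu>0 where \<mu>0: "\<mu>0 > l'" "\<forall>x\<in>S. x \<bullet> (B *v x) \<ge> \<mu>0 * (x \<bullet> x)"
  proof (cases "S = {0}")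
    case True
    then show ?thesis using that[of "l' + 1"] by auto
  next
    case False
    obtain m0 where m0: "m0 \<in> compr_eigenvalues S B" "\<forall>x\<in>S. x \<bullet> (B *v x) \<ge> m0 * (x \<bullet> x)"
      using eig_min[OF assms(3) False] by blast
    have "lambda_min_restr S B \<le> m0" unfolding lambda_min_restr_def
      using eig_finite[OF assms(3)] m0(1) by (rule Min_le)
    then show ?thesis using that[of m0] m0(2) assms(6) l'_def by auto
  qed
  have pd: "\<forall>x\<in>S. x \<noteq> 0 \<longrightarrow> x \<bullet> (C *v x) > 0"
  proof (intro ballI impI)
    fix x assume x: "x \<in> S" "x \<noteq> 0"
    have "x \<bullet> (C *v x) = x \<bullet> (B *v x) - l' * (x \<bullet> x)" by (simp add: Cv inner_diff_right)
    also have "\<dots> \<ge> (\<mu>0 - l') * (x \<bullet> x)" using \<mu>0(2) x(1) by (simp add: algebra_simps)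
    finally show "x \<bullet> (C *v x) > 0" using \<mu>0(1) x(2)
      by (smt (verit) inner_gt_zero_iff mult_pos_pos)
  qed
  define A where "A = P ** C ** P"
  obtain M where AM: "A ** M = P" and MA: "M ** A = P" and PM: "P ** M = M" and pM: "pinv A = M"
    using pinv_construct[OF Ct pd] unfolding A_def by blast
  have Av: "A *v x = P *v (C *v (P *v x))" for x unfolding A_def by (simp add: matrix_vector_mul_assoc matrix_mul_assoc)
  have AMv: "A *v (M *v x) = P *v x" for x using AM by (simp add: matrix_vector_mul_assoc)
  have MAv: "M *v (A *v x) = P *v x" for x using MA by (simp add: matrix_vector_mul_assoc)
  have PMv: "P *v (M *v x) = M *v x" for x using PM by (simp add: matrix_vector_mul_assoc)
  have MP: "M ** P = M" by (metis AM MA PM matrix_mul_assoc)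
  have MPv: "M *v (P *v x) = M *v x" for x using MP by (simp add: matrix_vector_mul_assoc)
  have At: "transpose A = A" unfolding A_def by (simp add: matrix_transpose_mul ptrans Ct matrix_mul_assoc)
  have Mt: "transpose M = M"
  proof -
    have h1: "transpose M ** A = P" using arg_cong[OF AM, of transpose] by (simp add: matrix_transpose_mul ptrans At)
    have h2: "transpose M ** P = transpose M" using arg_cong[OF PM, of transpose] by (simp add: matrix_transpose_mul ptrans)
    have "transpose M = transpose M ** (A ** M)" using h2 AM by simp
    also have "\<dots> = M" using h1 PM by (simp add: matrix_mul_assoc)
    finally show ?thesis .
  qed
  have Msym: "x \<bullet> (M *v y) = (M *v x) \<bullet> y" for x y using sym_inner[OF Mt] .
  have Asym: "x \<bullet> (A *v y) = (A *v x) \<bullet> y" for x y using sym_inner[OF At] .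
  define w where "w = P *v v"
  define z where "z = M *v v"
  define a where "a = z \<bullet> z"
  define b where "b = v \<bullet> z"
  have Mw: "M *v w = z" unfolding w_def z_def by (rule MPv)
  have Pz: "P *v z = z" unfolding z_def by (rule PMv)
  have Az: "A *v z = w" unfolding w_def z_def by (rule AMv)
  have wz: "w \<bullet> z = b" unfolding w_def b_def using psym[of v z] Pz by simp
  have b0: "b \<ge> 0"
  proof -
    have "b = (A *v z) \<bullet> z" using wz Az by simp
    also have "\<dots> = z \<bullet> (A *v z)" by (simp add: inner_commute)
    also have "\<dots> = z \<bullet> (C *v z)" using Av[of z] Pz psym[of z "C *v z"] by simp
    finally show ?thesis using pd Pz pS[of z] by (cases "z = 0") (auto intro: less_imp_le)
  qed
  have a0: "a \<ge> 0" unfolding a_def by simp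
  define \<Delta> where "\<Delta> = lower_pot S l' B - lower_pot S l B"
  have hyp: "(1 / \<Delta>) * a - b \<ge> 1 / t"
  proof -
    have "((1 / \<Delta>) *\<^sub>R (M ** M) - M) \<bullet>\<^sub>F outer v \<ge> 1 / t"
      using assms(7) unfolding Let_def \<Delta>_def l'_def C_def pM[unfolded A_def C_def l'_def] by simp
    moreover have "((1 / \<Delta>) *\<^sub>R (M ** M) - M) \<bullet>\<^sub>F outer v = (1 / \<Delta>) * a - b"
    proof -
      have "((1 / \<Delta>) *\<^sub>R (M ** M) - M) *v v = (1 / \<Delta>) *\<^sub>R (M *v z) - z"
        unfolding z_def by (simp add: matrix_vector_mult_diff_rdistrib smv matrix_vector_mul_assoc)
      moreover have "v \<bullet> (M *v z) = a" unfolding a_def using Msym[of v z] z_def by simp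
      ultimately show ?thesis unfolding frob_outer b_def by (simp add: inner_diff_right)
    qed
    ultimately show ?thesis by simp
  qed
  have tb: "1 + t * b > 0" using b0 assms(5) by (simp add: add_pos_nonneg)
  define s where "s = t / (1 + t * b)"
  have s1: "s * (1 + t * b) = t" unfolding s_def using tb by simp
  define C2 where "C2 = (B + t *\<^sub>R outer v) - l' *\<^sub>R mat 1"
  have C2v: "C2 *v x = C *v x + (t * (v \<bullet> x)) *\<^sub>R v" for x
    unfolding C2_def C_def
    by (simp add: matrix_vector_mult_diff_rdistrib matrix_vector_mult_add_rdistrib smv outer_mv)
  define A2 where "A2 = P ** C2 ** P"
  have A2v: "A2 *v x = A *v x + (t * (w \<bullet> x)) *\<^sub>R w" for x
  proof -
    have "A2 *v x = P *v (C2 *v (P *v x))" unfolding A2_def by (simp add: matrix_vector_mul_assoc matrix_mul_assoc)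
    also have "\<dots> = P *v (C *v (P *v x)) + (t * (v \<bullet> (P *v x))) *\<^sub>R (P *v v)"
      by (simp add: C2v matrix_vector_right_distrib matrix_vector_mult_scaleR)
    also have "v \<bullet> (P *v x) = w \<bullet> x" unfolding w_def by (rule psym)
    finally show ?thesis using Av w_def by simp
  qed
  define M2 where "M2 = M - s *\<^sub>R outer z"
  have M2v: "M2 *v x = M *v x - (s * (z \<bullet> x)) *\<^sub>R z" for x
    unfolding M2_def by (simp add: matrix_vector_mult_diff_rdistrib smv outer_mv)
  have A2M2: "A2 ** M2 = P"
  proof -
    have "A2 *v (M2 *v x) = P *v x" for x
    proof -
      have e1: "A *v (M2 *v x) = P *v x - (s * (z \<bullet> x)) *\<^sub>R w"
        using M2v AMv Az by (simp add: matrix_vector_mult_diff_distrib matrix_vector_mult_scaleR)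
      have e2: "w \<bullet> (M2 *v x) = z \<bullet> x - s * (z \<bullet> x) * b"
        using M2v Msym[of w x] Mw wz by (simp add: inner_diff_right)
      have "A2 *v (M2 *v x) = P *v x + ((t - s * (1 + t * b)) * (z \<bullet> x)) *\<^sub>R w"
        unfolding A2v e1 e2 by (simp add: algebra_simps)
      then show ?thesis using s1 by simp
    qed
    then show ?thesis unfolding matrix_eq by (simp add: matrix_vector_mul_assoc[symmetric])
  qed
  have M2A2: "M2 ** A2 = P"
  proof -
    have "M2 *v (A2 *v x) = P *v x" for x
    proof -
      have e1: "z \<bullet> (A2 *v x) = w \<bullet> x + t * (w \<bullet> x) * b"
        using A2v Asym[of z x] Az wz by (simp add: inner_add_right inner_commute)
      have e2: "M *v (A2 *v x) = P *v x + (t * (w \<bullet> x)) *\<^sub>R z"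
        using A2v MAv Mw by (simp add: matrix_vector_right_distrib matrix_vector_mult_scaleR)
      have "M2 *v (A2 *v x) = P *v x + ((t - s * (1 + t * b)) * (w \<bullet> x)) *\<^sub>R z"
        unfolding M2v e1 e2 by (simp add: algebra_simps)
      then show ?thesis using s1 by simp
    qed
    then show ?thesis unfolding matrix_eq by (simp add: matrix_vector_mul_assoc[symmetric])
  qed
  have PA2: "P ** A2 = A2"
    unfolding matrix_eq A2_def by (simp add: matrix_vector_mul_assoc[symmetric] pid pS)
  have PM2: "P ** M2 = M2"
  proof -
    have "P *v (M2 *v x) = M2 *v x" for x
      using M2v PMv Pz by (simp add: matrix_vector_mult_diff_distrib matrix_vector_mult_scaleR)
    then show ?thesis unfolding matrix_eq by (simp add: matrix_vector_mul_assoc[symmetric])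
  qed
  have pM2: "pinv A2 = M2" by (rule pinv_eq[OF A2M2 M2A2 PA2 PM2 ptrans])
  have pot2: "lower_pot S l' (B + t *\<^sub>R outer v) = lower_pot S l' B - s * a"
  proof -
    have "lower_pot S l' (B + t *\<^sub>R outer v) = trace M2"
      unfolding lower_pot_def using pM2 unfolding A2_def C2_def by simp
    also have "\<dots> = trace M - s * a" unfolding M2_def a_def by (simp add: trace_sub trace_scale trace_outer)
    also have "trace M = lower_pot S l' B" unfolding lower_pot_def using pM unfolding A_def C_def by simp
    finally show ?thesis .
  qed
  have conc1: "lower_pot S l' (B + t *\<^sub>R outer v) \<le> lower_pot S l B"
    using final_ineq[OF a0 b0 assms(5) hyp s_def] unfolding pot2 \<Delta>_def by simp
  have conc2: "lambda_min_restr S (B + t *\<^sub>R outer v) > l'"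
  proof (cases "S = {0}")
    case True
    then have "compr_eigenvalues S X = {}" for X unfolding compr_eigenvalues_def by auto
    then show ?thesis using assms(6) l'_def unfolding lambda_min_restr_def by simp
  next
    case False
    define C3 where "C3 = B + t *\<^sub>R outer v"
    have C3t: "transpose C3 = C3" unfolding C3_def using assms(3)
      by (simp add: transpose_add transpose_scalar outer_trans)
    have fin: "finite (compr_eigenvalues S C3)" by (rule eig_finite[OF C3t])
    have ne: "compr_eigenvalues S C3 \<noteq> {}" using eig_min[OF C3t False] by blast
    have "lambda_min_restr S C3 \<in> compr_eigenvalues S C3"
      unfolding lambda_min_restr_def using fin ne by (rule Min_in)
    then obtain x where x: "x \<in> S" "x \<noteq> 0" "P *v (C3 *v x) = lambda_min_restr S C3 *\<^sub>R x"
      unfolding compr_eigenvalues_def by blast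
    let ?m = "lambda_min_restr S C3"
    have "?m * (x \<bullet> x) = x \<bullet> (P *v (C3 *v x))" using x(3) by simp
    also have "\<dots> = x \<bullet> (C3 *v x)" using psym[of x "C3 *v x"] pid[OF x(1)] by simp
    also have "\<dots> = x \<bullet> (B *v x) + t * (v \<bullet> x) * (v \<bullet> x)"
      unfolding C3_def by (simp add: matrix_vector_mult_add_rdistrib smv outer_mv inner_add_right inner_commute)
    also have "\<dots> \<ge> x \<bullet> (B *v x)"
    proof -
      have "0 \<le> (v \<bullet> x) * (v \<bullet> x)" by simp
      then have "0 \<le> t * ((v \<bullet> x) * (v \<bullet> x))" using assms(5) by simp
      then show ?thesis by (simp add: mult.assoc)
    qed
    finally have h: "?m * (x \<bullet> x) \<ge> x \<bullet> (B *v x)" .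
    have "\<mu>0 * (x \<bullet> x) \<le> x \<bullet> (B *v x)" using \<mu>0(2) x(1) by blast
    then have "?m * (x \<bullet> x) \<ge> \<mu>0 * (x \<bullet> x)" using h by linarith
    moreover have "x \<bullet> x > 0" using x(2) by simp
    ultimately have "?m \<ge> \<mu>0" by simp
    then show ?thesis using \<mu>0(1) C3_def by simp
  qed
  show ?thesis using conc1 conc2 unfolding l'_def by simp
qed


end
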